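(* For any additive submonoid $N \subseteq \mathbb{N}$, both $\mathrm{Sym}(\Omega) \cup S(N)$ and $\mathrm{Sym}(\Omega) \cup S(N) \cup \mathrm{Inj}_{\infty}(\Omega)$ are submonoids of $\mathrm{Inj}(\Omega)$. Conversely, every submonoid $M \subseteq \mathrm{Inj}(\Omega)$ containing $\mathrm{Sym}(\Omega)$ equals either $\mathrm{Sym}(\Omega) \cup S(N)$ or $\mathrm{Sym}(\Omega) \cup S(N) \cup \mathrm{Inj}_{\infty}(\Omega)$, where $N = M_\mathbb{N}$ (a submonoid of $\mathbb{N}$).
   Context: $\Omega$ is a countably infinite set; $\mathrm{Inj}(\Omega)$ is the monoid of all injective maps $\Omega\to\Omega$ under composition (maps written on the right), $\mathrm{Sym}(\Omega)$ the group of permutations. $\mathbb{N}$ denotes the nonnegative integers. $\mathrm{Inj}_\infty(\Omega)=\{f\in\mathrm{Inj}(\Omega): |\Omega\setminus(\Omega)f|=\aleph_0\}$. For $M\subseteq\mathrm{Inj}(\Omega)$, $M_\mathbb{N}=\{|\Omega\setminus(\Omega)f|: f\in M\}\cap\mathbb{N}$. For $N\subseteq\mathbb{N}$, $S(N)=\{f\in\mathrm{Inj}(\Omega): |\Omega\setminus(\Omega)f|\in N\setminus\{0\}\}$. *)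

theory Defs
  imports Main "HOL-Library.Countable"
begin

text \<open>Omega is modelled as a countably infinite type 'a (class countable,
  plus the assumption that UNIV is infinite).\<close>

definition Inj :: "('a \<Rightarrow> 'a) set" where
  "Inj = {f. inj f}"

definition Sym :: "('a \<Rightarrow> 'a) set" where
  "Sym = {f. bij f}"

definition Inj_inf :: "('a \<Rightarrow> 'a) set" where
  "Inj_inf = {f. inj f \<and> infinite (UNIV - range f)}"

definition MN :: "('a \<Rightarrow> 'a) set \<Rightarrow> nat set" where
  "MN M = {n. \<exists>f\<in>M. finite (UNIV - range f) \<and> card (UNIV - range f) = n}"

definition S :: "nat set \<Rightarrow> ('a \<Rightarrow> 'a) set" where
  "S N = {f. inj f \<and> finite (UNIV - range f) \<and> card (UNIV - range f) \<in> N - {0}}"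

definition inj_submonoid :: "('a \<Rightarrow> 'a) set \<Rightarrow> bool" where
  "inj_submonoid M \<longleftrightarrow> M \<subseteq> Inj \<and> id \<in> M \<and> (\<forall>f\<in>M. \<forall>g\<in>M. f \<circ> g \<in> M)"

definition nat_add_submonoid :: "nat set \<Rightarrow> bool" where
  "nat_add_submonoid N \<longleftrightarrow> 0 \<in> N \<and> (\<forall>a\<in>N. \<forall>b\<in>N. a + b \<in> N)"

end

theory Submission
  imports Defs "HOL-Library.Countable_Set"
begin

lemma defect_comp:
  assumes "inj f"
  shows "UNIV - range (f \<circ> g) = (UNIV - range f) \<union> f ` (UNIV - range g)"
  using assms by (auto simp: inj_eq)

lemma defect_disj: "(UNIV - range f) \<inter> f ` A = {}"
  by auto

lemma fin_comp:
  assumes "inj f"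
  shows "finite (UNIV - range (f \<circ> g)) \<longleftrightarrow> finite (UNIV - range f) \<and> finite (UNIV - range g)"
  proof -
  have "finite (f ` (UNIV - range g)) \<longleftrightarrow> finite (UNIV - range g)"
    by (rule finite_image_iff) (rule inj_on_subset[OF assms], simp)
  then show ?thesis unfolding defect_comp[OF assms] by simp
qed

lemma card_comp:
  assumes "inj f" "finite (UNIV - range f)" "finite (UNIV - range g)"
  shows "card (UNIV - range (f \<circ> g)) = card (UNIV - range f) + card (UNIV - range g)"
proof -
  have "card (UNIV - range (f \<circ> g)) = card (UNIV - range f) + card (f ` (UNIV - range g))"
    unfolding defect_comp[OF assms(1)]
    by (rule card_Un_disjoint) (use assms defect_disj in auto)
  also have "card (f ` (UNIV - range g)) = card (UNIV - range g)"
    by (rule card_image) (rule inj_on_subset[OF assms(1)], simp)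
  finally show ?thesis .
qed

lemma bij_iff_defect:
  "bij f \<longleftrightarrow> inj f \<and> finite (UNIV - range f) \<and> card (UNIV - range f) = 0"
proof
  assume "bij f" then show "inj f \<and> finite (UNIV - range f) \<and> card (UNIV - range f) = 0"
    by (simp add: bij_def)
next
  assume "inj f \<and> finite (UNIV - range f) \<and> card (UNIV - range f) = 0"
  then have "UNIV - range f = {}" "inj f" using card_0_eq by blast+
  then show "bij f" unfolding bij_def by blast
qed

lemma transfer:
  assumes "inj f" "inj g" "bij_betw h (UNIV - range f) (UNIV - range g)"
  shows "\<exists>\<sigma>. bij \<sigma> \<and> g = \<sigma> \<circ> f"
proof -
  define \<sigma> where "\<sigma> y = (if y \<in> range f then g (inv f y) else h y)" for y
  have b1: "bij_betw \<sigma> (range f) (range g)"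
  proof -
    have "bij_betw (g \<circ> inv f) (range f) (range g)"
      by (rule bij_betw_trans[of _ _ UNIV]) (use assms in \<open>auto simp: bij_betw_def inj_on_def\<close>)
    then show ?thesis by (rule bij_betw_cong[THEN iffD1, rotated]) (auto simp: \<sigma>_def)
  qed
  have b2: "bij_betw \<sigma> (UNIV - range f) (UNIV - range g)"
    using assms(3) by (rule bij_betw_cong[THEN iffD1, rotated]) (auto simp: \<sigma>_def)
  have "bij_betw \<sigma> (range f \<union> (UNIV - range f)) (range g \<union> (UNIV - range g))"
    by (rule bij_betw_combine[OF b1 b2]) auto
  hence "bij \<sigma>" by simp
  moreover have "g = \<sigma> \<circ> f" using assms(1) by (auto simp: \<sigma>_def)
  ultimately show ?thesis by blast
qed

lemma exists_bij_inf:
  fixes A B :: "'a::countable set"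
  assumes "infinite A" "infinite B"
  shows "\<exists>h. bij_betw h A B"
proof -
  have "bij_betw (from_nat_into A) UNIV A" "bij_betw (from_nat_into B) UNIV B"
    using assms by (auto intro: bij_betw_from_nat_into)
  then have "bij_betw (from_nat_into B \<circ> inv_into UNIV (from_nat_into A)) A B"
    by (meson bij_betw_inv_into bij_betw_trans)
  then show ?thesis by blast
qed

theorem mainTheorem5:
  assumes "infinite (UNIV :: 'a::countable set)"
  shows "(\<forall>N. nat_add_submonoid N \<longrightarrow>
            inj_submonoid (Sym \<union> S N :: ('a \<Rightarrow> 'a) set) \<and>
            inj_submonoid (Sym \<union> S N \<union> Inj_inf :: ('a \<Rightarrow> 'a) set))
       \<and> (\<forall>M :: ('a \<Rightarrow> 'a) set. inj_submonoid M \<and> Sym \<subseteq> M \<longrightarrow>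
            nat_add_submonoid (MN M) \<and>
            (M = Sym \<union> S (MN M) \<or> M = Sym \<union> S (MN M) \<union> Inj_inf))"
proof (rule conjI)
 show "\<forall>N. nat_add_submonoid N \<longrightarrow>
            inj_submonoid (Sym \<union> S N :: ('a \<Rightarrow> 'a) set) \<and>
            inj_submonoid (Sym \<union> S N \<union> Inj_inf :: ('a \<Rightarrow> 'a) set)"
 proof (intro allI impI)
  have dsum: "finite (UNIV - range (f \<circ> g)) \<and> card (UNIV - range (f \<circ> g)) = card (UNIV - range f) + card (UNIV - range g)"
    if "inj f" "finite (UNIV - range f)" "finite (UNIV - range g)" for f g :: "'a \<Rightarrow> 'a"
    using that fin_comp card_comp by blast
  have inf1: "infinite (UNIV - range (f \<circ> g))" if "inj f" "infinite (UNIV - range f) \<or> infinite (UNIV - range g)"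
    for f g :: "'a \<Rightarrow> 'a" using that fin_comp by blast
  have Sym_inj: "Sym \<subseteq> (Inj :: ('a\<Rightarrow>'a) set)" by (auto simp: Sym_def Inj_def bij_def)
  fix N :: "nat set" assume N: "nat_add_submonoid N"
  have cls: "f \<in> Sym \<union> S N \<longleftrightarrow> inj f \<and> finite (UNIV - range f) \<and> card (UNIV - range f) \<in> N" for f :: "'a \<Rightarrow> 'a"
    using N unfolding Sym_def S_def nat_add_submonoid_def using bij_iff_defect[of f] by (cases "card (UNIV - range f) = 0") auto
  have P1: "inj_submonoid (Sym \<union> S N :: ('a \<Rightarrow> 'a) set)"
    unfolding inj_submonoid_def
  proof (intro conjI ballI)
    show "Sym \<union> S N \<subseteq> Inj" by (auto simp: Sym_def S_def Inj_def bij_def)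
    show "id \<in> Sym \<union> S N" by (auto simp: Sym_def)
    fix f g :: "'a \<Rightarrow> 'a" assume "f \<in> Sym \<union> S N" "g \<in> Sym \<union> S N"
    then show "f \<circ> g \<in> Sym \<union> S N" using N dsum unfolding cls nat_add_submonoid_def
      by (auto intro: inj_compose)
  qed
  have P2: "inj_submonoid (Sym \<union> S N \<union> Inj_inf :: ('a \<Rightarrow> 'a) set)"
    unfolding inj_submonoid_def
  proof (intro conjI ballI)
    show "Sym \<union> S N \<union> Inj_inf \<subseteq> Inj" by (auto simp: Sym_def S_def Inj_def Inj_inf_def bij_def)
    show "id \<in> Sym \<union> S N \<union> Inj_inf" by (auto simp: Sym_def)
    fix f g :: "'a \<Rightarrow> 'a" assume "f \<in> Sym \<union> S N \<union> Inj_inf" "g \<in> Sym \<union> S N \<union> Inj_inf"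
    then have "(f \<in> Sym \<union> S N \<or> f \<in> Inj_inf) \<and> (g \<in> Sym \<union> S N \<or> g \<in> Inj_inf)" by blast
    then have i: "inj f" "inj g" and c: "(finite (UNIV - range f) \<and> card (UNIV - range f) \<in> N) \<or> infinite (UNIV - range f)"
      "(finite (UNIV - range g) \<and> card (UNIV - range g) \<in> N) \<or> infinite (UNIV - range g)"
      unfolding cls Inj_inf_def by auto
    show "f \<circ> g \<in> Sym \<union> S N \<union> Inj_inf"
    proof (cases "finite (UNIV - range f) \<and> finite (UNIV - range g)")
      case True
      then have "f \<circ> g \<in> Sym \<union> S N" using c i N dsum[of f g] unfolding cls nat_add_submonoid_def
        by (auto intro: inj_compose)
      then show ?thesis by blast
    next
      case False
      then show ?thesis using inf1[of f g] i unfolding Inj_inf_def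
        by (auto intro: inj_compose)
    qed
  qed
  show "inj_submonoid (Sym \<union> S N :: ('a \<Rightarrow> 'a) set) \<and> inj_submonoid (Sym \<union> S N \<union> Inj_inf :: ('a \<Rightarrow> 'a) set)"
    using P1 P2 by blast
 qed
next
 show "\<forall>M :: ('a \<Rightarrow> 'a) set. inj_submonoid M \<and> Sym \<subseteq> M \<longrightarrow>
            nat_add_submonoid (MN M) \<and>
            (M = Sym \<union> S (MN M) \<or> M = Sym \<union> S (MN M) \<union> Inj_inf)"
 proof (intro allI impI)
  fix M :: "('a \<Rightarrow> 'a) set" assume "inj_submonoid M \<and> Sym \<subseteq> M"
  then have MI: "M \<subseteq> Inj" and idM: "id \<in> M" and cl: "\<And>f g. f \<in> M \<Longrightarrow> g \<in> M \<Longrightarrow> f \<circ> g \<in> M"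
    and SM: "Sym \<subseteq> M" unfolding inj_submonoid_def by auto
  have injM: "inj f" if "f \<in> M" for f using MI that by (auto simp: Inj_def)
  have dsum: "finite (UNIV - range (f \<circ> g)) \<and> card (UNIV - range (f \<circ> g)) = card (UNIV - range f) + card (UNIV - range g)"
    if "inj f" "finite (UNIV - range f)" "finite (UNIV - range g)" for f g :: "'a \<Rightarrow> 'a"
    using that fin_comp card_comp by blast
  have Q1: "nat_add_submonoid (MN M)"
    unfolding nat_add_submonoid_def
  proof (intro conjI ballI)
    show "0 \<in> MN M" unfolding MN_def using idM by (intro CollectI bexI[of _ id]) auto
    fix a b assume "a \<in> MN M" "b \<in> MN M"
    then obtain f g where "f \<in> M" "g \<in> M" "finite (UNIV - range f)" "finite (UNIV - range g)"
      "card (UNIV - range f) = a" "card (UNIV - range g) = b" unfolding MN_def by auto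
    then show "a + b \<in> MN M" unfolding MN_def using dsum[of f g] injM cl
      by (intro CollectI bexI[of _ "f \<circ> g"]) auto
  qed
  have trans: "g \<in> M" if a: "f \<in> M" "inj g" "\<exists>h. bij_betw h (UNIV - range f) (UNIV - range g)" for f g
  proof -
    obtain h where "bij_betw h (UNIV - range f) (UNIV - range g)" using a by blast
    then obtain \<sigma> where "bij \<sigma>" "g = \<sigma> \<circ> f" using transfer[OF injM[OF a(1)] a(2)] by blast
    then show ?thesis using cl[of \<sigma> f] SM a(1) by (auto simp: Sym_def)
  qed
  have sub1: "M \<subseteq> Sym \<union> S (MN M) \<union> Inj_inf"
  proof
    fix f assume f: "f \<in> M"
    show "f \<in> Sym \<union> S (MN M) \<union> Inj_inf"
    proof (cases "finite (UNIV - range f)")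
      case True
      then have "card (UNIV - range f) \<in> MN M" using f unfolding MN_def by auto
      show ?thesis
      proof (cases "card (UNIV - range f) = 0")
        case True2: True
        then have "f \<in> Sym" using True injM[OF f] bij_iff_defect[of f] unfolding Sym_def by blast
        then show ?thesis by blast
      next
        case False
        then have "f \<in> S (MN M)" using True injM[OF f] \<open>card (UNIV - range f) \<in> MN M\<close> unfolding S_def by blast
        then show ?thesis by blast
      qed
    next
      case False then show ?thesis using injM[OF f] unfolding Inj_inf_def by auto
    qed
  qed
  have sub2: "Sym \<union> S (MN M) \<subseteq> M"
  proof
    fix g :: "'a \<Rightarrow> 'a" assume "g \<in> Sym \<union> S (MN M)"
    then show "g \<in> M"
    proof
      assume "g \<in> Sym" then show ?thesis using SM by auto
    next
      assume "g \<in> S (MN M)"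
      then have g: "inj g" "finite (UNIV - range g)" "card (UNIV - range g) \<in> MN M" unfolding S_def by auto
      then obtain f where "f \<in> M" "finite (UNIV - range f)" "card (UNIV - range f) = card (UNIV - range g)"
        unfolding MN_def by auto
      then show ?thesis using trans[of f g] g finite_same_card_bij by blast
    qed
  qed
  have "M = Sym \<union> S (MN M) \<or> M = Sym \<union> S (MN M) \<union> Inj_inf"
  proof (cases "\<exists>f\<in>M. infinite (UNIV - range f)")
    case True
    then obtain f where f: "f \<in> M" "infinite (UNIV - range f)" by blast
    have "Inj_inf \<subseteq> M"
    proof
      fix g :: "'a \<Rightarrow> 'a" assume "g \<in> Inj_inf"
      then have "inj g" "infinite (UNIV - range g)" unfolding Inj_inf_def by auto
      then show "g \<in> M" using trans[of f g] f exists_bij_inf by blast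
    qed
    then show ?thesis using sub1 sub2 by blast
  next
    case False
    then have "M \<subseteq> Sym \<union> S (MN M)" using sub1 unfolding Inj_inf_def by blast
    then show ?thesis using sub2 by blast
  qed
  then show "nat_add_submonoid (MN M) \<and> (M = Sym \<union> S (MN M) \<or> M = Sym \<union> S (MN M) \<union> Inj_inf)"
    using Q1 by blast
 qed
qed

end
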